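(* There exist $a_1\ge1$ and $b_1\in(0,1)$, depending only on $\alpha$, such that for every $a>a_1$ and every $b\in(0,b_1)$ we have $\mathcal D(t,b)\subset B(p,r_p)$ for all $p\in\mathcal T(a,b)$ and all $t\in[z_p,-1]$.
   Context: $\mathbb H=\mathbb R^3$, $p=(x_p,y_p,z_p)$, $\rho_p=\sqrt{x_p^2+y_p^2}$, group law $(x,y,z)\cdot(x',y',z')=(x+x',y+y',z+z'+\tfrac12(xy'-yx'))$, dilations $\delta_\lambda(x,y,z)=(\lambda x,\lambda y,\lambda^2z)$. Fix $\alpha>0$ such that $d_\alpha(p,q)=\inf\{r>0:\delta_{1/r}(p^{-1}\cdot q)\in B_\alpha\}$ is a distance, $B_\alpha$ the closed Euclidean ball of radius $\alpha$ at $0$. $B(p,r)=\{q:d_\alpha(q,p)\le r\}$, $r_p=d_\alpha(0,p)$. $\mathcal T(a,b)=\{p: z_p<-a,\ \rho_p<b\}$ and $\mathcal D(t,b)=\{q: z_q=t,\ \rho_q<b\}$. *)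

theory Defs
  imports "HOL-Analysis.Analysis"
begin

type_synonym heis = "real \<times> real \<times> real"

definition hmult :: "heis \<Rightarrow> heis \<Rightarrow> heis" where
  "hmult p q = (case p of (x,y,z) \<Rightarrow> case q of (x',y',z') \<Rightarrow>
      (x + x', y + y', z + z' + (x*y' - y*x')/2))"

definition hinv :: "heis \<Rightarrow> heis" where
  "hinv p = (case p of (x,y,z) \<Rightarrow> (-x, -y, -z))"

definition hdil :: "real \<Rightarrow> heis \<Rightarrow> heis" where
  "hdil l p = (case p of (x,y,z) \<Rightarrow> (l*x, l*y, l^2*z))"

definition xc :: "heis \<Rightarrow> real" where "xc p = fst p"
definition yc :: "heis \<Rightarrow> real" where "yc p = fst (snd p)"
definition zc :: "heis \<Rightarrow> real" where "zc p = snd (snd p)"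
definition rho :: "heis \<Rightarrow> real" where "rho p = sqrt (xc p ^ 2 + yc p ^ 2)"

definition Balpha :: "real \<Rightarrow> heis set" where
  "Balpha \<alpha> = {p. xc p ^ 2 + yc p ^ 2 + zc p ^ 2 \<le> \<alpha>^2}"

definition dalpha :: "real \<Rightarrow> heis \<Rightarrow> heis \<Rightarrow> real" where
  "dalpha \<alpha> p q = Inf {r. r > 0 \<and> hdil (1/r) (hmult (hinv p) q) \<in> Balpha \<alpha>}"

definition is_distance :: "(heis \<Rightarrow> heis \<Rightarrow> real) \<Rightarrow> bool" where
  "is_distance d \<longleftrightarrow>
     (\<forall>p q. d p q \<ge> 0) \<and> (\<forall>p q. d p q = 0 \<longleftrightarrow> p = q) \<and>
     (\<forall>p q. d p q = d q p) \<and> (\<forall>p q s. d p s \<le> d p q + d q s)"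

definition hball :: "real \<Rightarrow> heis \<Rightarrow> real \<Rightarrow> heis set" where
  "hball \<alpha> p r = {q. dalpha \<alpha> q p \<le> r}"

definition rp :: "real \<Rightarrow> heis \<Rightarrow> real" where
  "rp \<alpha> p = dalpha \<alpha> (0,0,0) p"

definition Tset :: "real \<Rightarrow> real \<Rightarrow> heis set" where
  "Tset a b = {p. zc p < -a \<and> rho p < b}"

definition Dset :: "real \<Rightarrow> real \<Rightarrow> heis set" where
  "Dset t b = {q. zc q = t \<and> rho q < b}"

end

theory Submission imports Defs begin
lemma key:
  fixes x y z u v t r \<alpha> b :: real
  assumes a: "\<alpha> > 0" "b > 0" "b < 1/2" "b < \<alpha>/16" "x^2+y^2 < b^2" "u^2+v^2 < b^2"
     "z \<le> t" "t \<le> -1" "r > 0"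
     "(x/r)^2+(y/r)^2+((1/r)^2 * z)^2 \<le> \<alpha>^2"
  shows "((x-u)/r)^2 + ((y-v)/r)^2 + ((1/r)^2 * (z-t+(v  *  x - u  *  y)/2))^2 \<le> \<alpha>^2"
proof -
  define s where "s = r^2"
  have s: "s > 0" using a by (simp add: s_def)
  define H where "H = (x-u)^2+(y-v)^2"
  define D where "D = z-t+(v  *  x - u  *  y)/2"
  have hyp: "(x^2+y^2) * s + z^2 \<le> \<alpha>^2 * s^2"
  proof -
    have "(x/r)^2+(y/r)^2+((1/r)^2 * z)^2 = ((x^2+y^2) * s + z^2)/s^2"
      using a(9) by (simp add: s_def field_simps power2_eq_square)
    thus ?thesis using a(10) s by (simp add: divide_le_eq)
  qed
  have b2: "b^2 < \<alpha>/32"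
  proof -
    have "b * b < (\<alpha>/16) * (1/2)" using a by (intro mult_strict_mono) auto
    thus ?thesis by (simp add: power2_eq_square)
  qed
  have H: "H \<le> 4 * b^2"
  proof -
    have "H \<le> 2 * (x^2+y^2+u^2+v^2)" unfolding H_def
      using sum_squares_ge_zero[of "x+u" "y+v"] by (simp add: power2_eq_square algebra_simps)
    thus ?thesis using a(5,6) by simp
  qed
  have cs: "(v  *  x - u  *  y)^2 \<le> (u^2+v^2) * (x^2+y^2)"
    using sum_squares_ge_zero[of "u * x+v * y" 0] by (simp add: power2_eq_square algebra_simps)
  have "(u^2+v^2) * (x^2+y^2) \<le> b^2 * b^2"
    using a by (intro mult_mono) auto
  also have "b^2 * b^2 < (1/4) * (1/4)" 
  proof -
    have "b*b < (1/2)*(1/2)" using a by (intro mult_strict_mono) auto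
    hence "b^2 < 1/4" by (simp add: power2_eq_square)
    thus ?thesis by (intro mult_strict_mono) auto
  qed
  finally have "(v  *  x - u  *  y)^2 < (1/4)^2" using cs by (simp add: power2_eq_square)
  hence c: "\<bar>v * x-u * y\<bar> < 1/4" using power2_less_imp_less[of "\<bar>v * x-u * y\<bar>" "1/4"] by simp
  have c2: "-1/4 < v * x-u * y" "v * x-u * y < 1/4" using c by linarith+
  have Dle: "\<bar>D\<bar> \<le> -z - 1/2"
  proof -
    define w where "w = v * x-u * y"
    have "-1/4 < w" "w < 1/4" using c2 unfolding w_def by auto
    thus ?thesis unfolding D_def w_def[symmetric] abs_le_iff using a(7,8) by (intro conjI; linarith)
  qed
  hence D2: "D^2 \<le> (z+1/2)^2"
    using power_mono[of "\<bar>D\<bar>" "-z-1/2" 2] by (simp add: power2_eq_square algebra_simps)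
  have main: "H * s + D^2 \<le> \<alpha>^2 * s^2"
  proof (cases "\<alpha> * s \<le> -2 * z")
    case True
    have "H * s \<le> 4 * b^2 * s" using H s by (simp add: mult_right_mono)
    also have "\<dots> \<le> (\<alpha>/8) * s" using b2 s by (simp add: mult_right_mono)
    also have "\<dots> \<le> -z/4" using True by simp
    finally have "H * s + D^2 \<le> z^2" using D2 a by (simp add: power2_eq_square algebra_simps)
    moreover have "0 \<le> (x^2+y^2) * s" using s by simp
    ultimately show ?thesis using hyp by linarith
  next
    case False
    have z2: "z^2 \<le> (\<alpha> * s)^2/4"
    proof -
      have "(-2 * z)^2 \<le> (\<alpha> * s)^2" using False a by (intro power_mono) auto
      thus ?thesis by (simp add: power2_eq_square)
    qed
    have "H * s \<le> 4 * b^2 * s" using H s by (simp add: mult_right_mono)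
    also have "\<dots> \<le> (\<alpha>/8) * s" using b2 s by (simp add: mult_right_mono)
    also have "\<dots> \<le> (3/4) * (\<alpha> * s)^2"
    proof -
      have "\<alpha> * s \<ge> 2" using False a by linarith
      hence "(\<alpha> * s) * 1 \<le> (\<alpha> * s) * (\<alpha> * s)" by (intro mult_left_mono) auto
      moreover have "(\<alpha>/8) * s = (\<alpha> * s)/8" "(3/4) * (\<alpha> * s)^2 = (3/4)*((\<alpha> * s) * (\<alpha> * s))"
        by (simp_all add: power2_eq_square)
      ultimately show ?thesis using \<open>\<alpha> * s \<ge> 2\<close> by linarith
    qed
    finally have "H * s \<le> (3/4) * (\<alpha> * s)^2" .
    moreover have "D^2 \<le> z^2" using D2 a by (simp add: power2_eq_square algebra_simps)
    ultimately show ?thesis using z2 by (simp add: power_mult_distrib)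
  qed
  have "((x-u)/r)^2 + ((y-v)/r)^2 + ((1/r)^2 * (z-t+(v  *  x - u  *  y)/2))^2 = (H * s + D^2)/s^2"
    using a(9) by (simp add: s_def H_def D_def field_simps power2_eq_square)
  also have "\<dots> \<le> \<alpha>^2" using main s by (simp add: divide_le_eq)
  finally show ?thesis .
qed

lemma mem_iff:
  fixes x y z u v t r \<alpha> :: real
  shows "hdil (1/r) (hmult (hinv (u,v,t)) (x,y,z)) \<in> Balpha \<alpha> \<longleftrightarrow>
    ((x-u)/r)^2 + ((y-v)/r)^2 + ((1/r)^2 * (z-t+(v * x - u * y)/2))^2 \<le> \<alpha>^2"
proof -
  have e1: "(1/r) * (-u+x) = (x-u)/r" "(1/r) * (-v+y) = (y-v)/r"
     "-t+z+((-u) * y - (-v) * x)/2 = z-t+(v * x - u * y)/2" by (auto simp: field_simps)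
  show ?thesis by (simp add: hdil_def hmult_def hinv_def Balpha_def xc_def yc_def zc_def e1)
qed

lemma nonemp:
  fixes x y z \<alpha> :: real
  assumes a: "\<alpha> > 0" "x^2+y^2 < \<alpha>/32" "z \<le> -1"
  shows "(x/sqrt (2*(-z)/\<alpha>))^2+(y/sqrt (2*(-z)/\<alpha>))^2+((1/sqrt (2*(-z)/\<alpha>))^2 * z)^2 \<le> \<alpha>^2"
proof -
  define s where "s = 2*(-z)/\<alpha>"
  have zn: "2*z/\<alpha> < 0" using a by (intro divide_neg_pos) auto
  have s: "s > 0" using a zn by (simp add: s_def)
  have ss: "(sqrt s)^2 = s" using s by simp
  have "(x/sqrt s)^2+(y/sqrt s)^2+((1/sqrt s)^2 * z)^2 = (x^2+y^2)/s + z^2/s^2"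
    by (simp add: power_divide ss power_mult_distrib add_divide_distrib)
  also have "z^2/s^2 = \<alpha>^2/4" using a by (simp add: s_def power_divide field_simps power2_eq_square)
  also have "(x^2+y^2)/s \<le> (\<alpha>/32)/s" using a s by (intro divide_right_mono) auto
  also have "(\<alpha>/32)/s \<le> (\<alpha>/32)/(2/\<alpha>)"
  proof (rule divide_left_mono)
    show "2/\<alpha> \<le> s" unfolding s_def using divide_right_mono[of 2 "2*(-z)" \<alpha>] a by linarith
  qed (use a s in \<open>auto simp: divide_pos_pos\<close>)
  also have "(\<alpha>/32)/(2/\<alpha>) = \<alpha>^2/64" by (simp add: power2_eq_square)
  finally have L: "(x/sqrt s)^2+(y/sqrt s)^2+((1/sqrt s)^2 * z)^2 \<le> \<alpha>^2/64 + \<alpha>^2/4" by simp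
  have "\<alpha>^2/64 + \<alpha>^2/4 \<le> \<alpha>^2" by simp
  thus ?thesis unfolding s_def[symmetric] using L by linarith
qed

lemma rho_lt:
  fixes p :: heis and b :: real
  assumes "rho p < b"
  shows "xc p ^2 + yc p^2 < b^2"
proof -
  have "0 \<le> rho p" by (simp add: rho_def)
  hence "(rho p)^2 < b^2" using assms by (intro power_strict_mono) auto
  thus ?thesis by (simp add: rho_def)
qed

theorem lemma4p5:
  fixes \<alpha> :: real
  assumes "\<alpha> > 0" and "is_distance (dalpha \<alpha>)"
  shows "\<exists>a1 b1. a1 \<ge> 1 \<and> 0 < b1 \<and> b1 < 1 \<and>
    (\<forall>a b. a > a1 \<longrightarrow> 0 < b \<longrightarrow> b < b1 \<longrightarrow>
      (\<forall>p \<in> Tset a b. \<forall>t. zc p \<le> t \<and> t \<le> -1 \<longrightarrow>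
          Dset t b \<subseteq> hball \<alpha> p (rp \<alpha> p)))"
proof (intro exI conjI allI impI ballI subsetI)
  show "(1::real) \<ge> 1" by simp
  show "0 < min (1/2) (\<alpha>/16)" using assms by simp
  show "min (1/2) (\<alpha>/16) < 1" by simp
  fix a b :: real and p q :: heis and t :: real
  assume ab: "a > 1" "0 < b" "b < min (1/2) (\<alpha>/16)" and pT: "p \<in> Tset a b"
    and zt: "zc p \<le> t \<and> t \<le> -1" and qD: "q \<in> Dset t b"
  obtain x y z where p: "p = (x,y,z)" by (cases p) auto
  obtain u v t' where q: "q = (u,v,t')" by (cases q) auto
  have tt: "t' = t" using qD q by (simp add: Dset_def zc_def)
  have zz: "zc p = z" "xc p = x" "yc p = y" by (simp_all add: p zc_def xc_def yc_def)
  have xy: "x^2+y^2 < b^2" using rho_lt[of p b] pT zz by (simp add: Tset_def)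
  have uv: "u^2+v^2 < b^2" using rho_lt[of q b] qD q by (simp add: Dset_def xc_def yc_def)
  have b1: "b < 1/2" "b < \<alpha>/16" using ab by auto
  have b2: "b^2 < \<alpha>/32"
  proof -
    have "b*b < (\<alpha>/16)*(1/2)" using b1 ab by (intro mult_strict_mono) auto
    thus ?thesis by (simp add: power2_eq_square)
  qed
  define S where "S = {r. r > 0 \<and> hdil (1/r) (hmult (hinv (0,0,0)) p) \<in> Balpha \<alpha>}"
  define Sw where "Sw = {r. r > 0 \<and> hdil (1/r) (hmult (hinv q) p) \<in> Balpha \<alpha>}"
  have S: "r \<in> S \<longleftrightarrow> r > 0 \<and> (x/r)^2+(y/r)^2+((1/r)^2 * z)^2 \<le> \<alpha>^2" for r
    unfolding S_def using mem_iff[of r 0 0 0 x y z \<alpha>] by (simp add: p)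
  have Sw: "r \<in> Sw \<longleftrightarrow> r > 0 \<and> ((x-u)/r)^2 + ((y-v)/r)^2 + ((1/r)^2 * (z-t+(v * x - u * y)/2))^2 \<le> \<alpha>^2" for r
    unfolding Sw_def using mem_iff[of r u v t x y z \<alpha>] by (simp add: p q tt)
  have zle: "z \<le> t" "t \<le> -1" using zt zz by auto
  have "sqrt (2*(-z)/\<alpha>) \<in> S"
  proof -
    have zn: "2*z/\<alpha> < 0" using assms zle by (intro divide_neg_pos) auto
    show ?thesis unfolding S using nonemp[of \<alpha> x y z] assms xy b2 zle zn by auto
  qed
  hence ne: "S \<noteq> {}" by auto
  have bdd: "bdd_below Sw" unfolding Sw_def by (rule bdd_belowI[of _ 0]) auto
  have sub: "S \<subseteq> Sw"
  proof
    fix r assume "r \<in> S"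
    thus "r \<in> Sw" unfolding S Sw using key[of \<alpha> b x y u v z t r] assms ab b1 xy uv zle by auto
  qed
  have "Inf Sw \<le> Inf S" by (rule cInf_superset_mono[OF ne bdd sub])
  moreover have "dalpha \<alpha> q p = Inf Sw" by (simp add: dalpha_def Sw_def)
  moreover have "rp \<alpha> p = Inf S" by (simp add: rp_def dalpha_def S_def)
  ultimately show "q \<in> hball \<alpha> p (rp \<alpha> p)" by (simp add: hball_def)
qed

end
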